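(* Let $N\ge 2$, $M\ge 2$, $d\ge 2$ be integers and let $\{p(\boldsymbol{a}|\boldsymbol{x})\}$ be any $(N+1)$-partite nonsignalling probability distribution in which each party $A^{(k)}$, $k=1,\dots,N+1$, chooses one of $M$ measurements $A^{(k)}_{x_k}$, $x_k\in\{1,\dots,M\}$, each with $d$ outcomes in $\mathbb{Z}_d=\{0,\dots,d-1\}$. Then $$I^{N,M,d}_{A^{(1)}\cdots A^{(N)}}+\big\langle[A^{(k)}_{x_k}-A^{(N+1)}_{x_{N+1}}]\big\rangle+\big\langle[A^{(N+1)}_{x_{N+1}}-A^{(k)}_{x_k}]\big\rangle\ \ge\ d-1$$ for all $x_k,x_{N+1}\in\{1,\dots,M\}$ and all $k\in\{1,\dots,N\}$, where $I^{N,M,d}_{A^{(1)}\cdots A^{(N)}}$ is the Bell expression (evaluated on the marginal of the first $N$ parties) defined in the context.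
   Context: Notation: $[\Omega]$ denotes $\Omega$ modulo $d$, and $\langle[\Omega]\rangle=\sum_{i=0}^{d-1} i\,P([\Omega]=i)$, computed from the (well-defined by no-signalling) marginal joint distribution of the measurements appearing in $\Omega$. For a party $X$ with observables $X_1,\dots,X_M$, indices beyond $M$ are interpreted by $X_{iM+\gamma}:=[X_\gamma+i]$ (the outcome shifted by $i$ mod $d$), $\gamma\in\{1,\dots,M\}$. The Bell expression is defined recursively. For $N=2$: $I^{2,M,d}_{A^{(1)}A^{(2)}}=\sum_{\alpha=1}^{M}\big(\langle[A^{(1)}_\alpha-A^{(2)}_\alpha]\rangle+\langle[A^{(2)}_\alpha-A^{(1)}_{\alpha+1}]\rangle\big)$. For $N\ge3$: $I^{N,M,d}_{A^{(1)}\cdots A^{(N)}}=\frac1M\sum_{\alpha_{N-1}=1}^{M} I^{N-1,M,d}_{A^{(1)}\cdots A^{(N-1)}}(\alpha_{N-1})\circ A^{(N)}_{\alpha_{N-1}}$, where $I^{N-1,M,d}(\alpha_{N-1})$ is $I^{N-1,M,d}$ with the observable index $\alpha_{N-2}$ of the last party $A^{(N-1)}$ relabelled as $\alpha_{N-2}\to\alpha_{N-2}+\alpha_{N-1}-1$, and "$\circ A^{(N)}_{\gamma}$" means inserting $A^{(N)}_{\gamma}$ inside each bracket $\langle[\cdot]\rangle$ with the sign opposite to that of $A^{(N-1)}$ in that bracket. Explicitly, this gives $I^{N,M,d}=\frac{1}{M^{N-2}}\sum_{\alpha_1,\dots,\alpha_{N-1}=1}^{M}\Big(\big\langle[A^{(1)}_{\alpha_1}+S]\big\rangle+\big\langle[-A^{(1)}_{\alpha_1+1}-S]\big\rangle\Big)$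 with $S=\sum_{k=2}^{N-1}(-1)^{k-1}A^{(k)}_{\alpha_{k-1}+\alpha_k-1}+(-1)^{N-1}A^{(N)}_{\alpha_{N-1}}$ (for $N=2$, $S=-A^{(2)}_{\alpha_1}$). Its local (classical) bound is $I^{N,M,d}\ge d-1$ and its minimal nonsignalling value is $0$. Nonsignalling: marginals of any subset of parties are independent of the remaining parties' measurement choices. *)

theory Defs
  imports Complex_Main "HOL-Library.FuncSet"
begin

text \<open>Parties are indexed 0..n-1 (party A^(k) of the paper is index k-1).
  Settings are 1..M, outcomes 0..d-1.  A behaviour p maps an outcome
  vector a and a setting vector x (both extensional functions on the
  parties) to the probability p(a|x).\<close>

definition settings :: "nat \<Rightarrow> nat \<Rightarrow> (nat \<Rightarrow> nat) set" where
  "settings n M = {0..<n} \<rightarrow>\<^sub>E {1..M}"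

definition outcomes :: "nat \<Rightarrow> nat \<Rightarrow> (nat \<Rightarrow> nat) set" where
  "outcomes n d = {0..<n} \<rightarrow>\<^sub>E {0..<d}"

definition is_behaviour ::
  "nat \<Rightarrow> nat \<Rightarrow> nat \<Rightarrow> ((nat \<Rightarrow> nat) \<Rightarrow> (nat \<Rightarrow> nat) \<Rightarrow> real) \<Rightarrow> bool" where
  "is_behaviour n M d p \<longleftrightarrow>
     (\<forall>x\<in>settings n M. (\<forall>a\<in>outcomes n d. 0 \<le> p a x) \<and> (\<Sum>a\<in>outcomes n d. p a x) = 1)"

definition nonsignalling ::
  "nat \<Rightarrow> nat \<Rightarrow> nat \<Rightarrow> ((nat \<Rightarrow> nat) \<Rightarrow> (nat \<Rightarrow> nat) \<Rightarrow> real) \<Rightarrow> bool" where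
  "nonsignalling n M d p \<longleftrightarrow>
     (\<forall>S \<subseteq> {0..<n}. \<forall>x\<in>settings n M. \<forall>x'\<in>settings n M.
        (\<forall>i\<in>S. x i = x' i) \<longrightarrow>
        (\<forall>a\<in>outcomes n d.
           (\<Sum>b\<in>{b\<in>outcomes n d. \<forall>i\<in>S. b i = a i}. p b x) =
           (\<Sum>b\<in>{b\<in>outcomes n d. \<forall>i\<in>S. b i = a i}. p b x')))"

text \<open>A bracket term is a list of triples (party, observable index j, coefficient c),
  representing the sum of c * A^(party)_j.  Observable index j \<ge> 1 beyond M is
  interpreted as A_{iM+\<gamma>} = [A_\<gamma> + i], i.e. setting (j-1) mod M + 1 and outcome
  shift (j-1) div M.\<close>

definition obs_setting :: "nat \<Rightarrow> nat \<Rightarrow> nat" where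
  "obs_setting M j = (j - 1) mod M + 1"

definition obs_shift :: "nat \<Rightarrow> nat \<Rightarrow> int" where
  "obs_shift M j = int ((j - 1) div M)"

text \<open>Full setting vector used to evaluate a bracket: the parties appearing in
  the bracket get their settings, all other parties setting 1.  By nonsignalling
  this yields the marginal distribution of the parties in the bracket.\<close>
definition term_setting :: "nat \<Rightarrow> nat \<Rightarrow> (nat \<times> nat \<times> int) list \<Rightarrow> nat \<Rightarrow> nat" where
  "term_setting n M t = restrict (\<lambda>i. case find (\<lambda>(k, j, c). k = i) t of
        None \<Rightarrow> 1 | Some (k, j, c) \<Rightarrow> obs_setting M j) {0..<n}"

definition expval ::
  "nat \<Rightarrow> nat \<Rightarrow> nat \<Rightarrow> ((nat \<Rightarrow> nat) \<Rightarrow> (nat \<Rightarrow> nat) \<Rightarrow> real) \<Rightarrow> (nat \<times> nat \<times> int) list \<Rightarrow> real" where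
  "expval n M d p t =
     (\<Sum>a\<in>outcomes n d. p a (term_setting n M t) *
        of_int ((\<Sum>(k, j, c)\<leftarrow>t. c * (int (a k) + obs_shift M j)) mod int d))"

text \<open>The terms S (with overall sign s) of the explicit formula, for parties
  A^(1..N) (indices 0..N-1) and \<alpha> : {1..N-1} \<rightarrow> {1..M}:
  S = \<Sum>_{k=2}^{N-1} (-1)^(k-1) A^(k)_{\<alpha>_{k-1}+\<alpha>_k-1} + (-1)^(N-1) A^(N)_{\<alpha>_{N-1}}.\<close>
definition S_terms :: "nat \<Rightarrow> (nat \<Rightarrow> nat) \<Rightarrow> int \<Rightarrow> (nat \<times> nat \<times> int) list" where
  "S_terms N \<alpha> s =
     map (\<lambda>k. (k - 1, \<alpha> (k - 1) + \<alpha> k - 1, s * (-1) ^ (k - 1))) [2..<N]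
     @ [(N - 1, \<alpha> (N - 1), s * (-1) ^ (N - 1))]"

definition bellI ::
  "nat \<Rightarrow> nat \<Rightarrow> nat \<Rightarrow> nat \<Rightarrow> ((nat \<Rightarrow> nat) \<Rightarrow> (nat \<Rightarrow> nat) \<Rightarrow> real) \<Rightarrow> real" where
  "bellI n N M d p =
     (1 / real M ^ (N - 2)) *
     (\<Sum>\<alpha>\<in>{1..N-1} \<rightarrow>\<^sub>E {1..M}.
        expval n M d p ((0, \<alpha> 1, 1) # S_terms N \<alpha> 1) +
        expval n M d p ((0, \<alpha> 1 + 1, -1) # S_terms N \<alpha> (-1)))"

end

theory Submission
  imports Defs
begin

definition gobs :: "nat \<Rightarrow> nat \<Rightarrow> int \<Rightarrow> (nat \<Rightarrow> nat) \<Rightarrow> int" where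
  "gobs M q i a = int (a q) + (i - 1) div int M"
definition gset :: "nat \<Rightarrow> int \<Rightarrow> nat" where
  "gset M i = nat ((i - 1) mod int M) + 1"
definition md :: "nat \<Rightarrow> int \<Rightarrow> real" where
  "md d z = of_int (z mod int d)"
definition EE :: "nat \<Rightarrow> nat \<Rightarrow> ((nat \<Rightarrow> nat) \<Rightarrow> (nat \<Rightarrow> nat) \<Rightarrow> real) \<Rightarrow> (nat \<Rightarrow> nat) \<Rightarrow> ((nat \<Rightarrow> nat) \<Rightarrow> real) \<Rightarrow> real" where
  "EE n d p x F = (\<Sum>a\<in>outcomes n d. p a x * F a)"

lemma gset_range: "M > 0 \<Longrightarrow> gset M i \<in> {1..M}"
proof -
  assume M: "M > 0"
  have "0 \<le> (i - 1) mod int M" "(i - 1) mod int M < int M" using M by auto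
  then show ?thesis unfolding gset_def by auto
qed

lemma gset_int: "M > 0 \<Longrightarrow> int (gset M i) = i - int M * ((i - 1) div int M)"
proof -
  assume M: "M > 0"
  have "0 \<le> (i - 1) mod int M" using M by auto
  then have "int (gset M i) = (i - 1) mod int M + 1" unfolding gset_def by simp
  also have "\<dots> = i - int M * ((i - 1) div int M)"
    using div_mult_mod_eq[of "i - 1" "int M"] by (simp add: algebra_simps)
  finally show ?thesis .
qed

lemma gset_per: "M > 0 \<Longrightarrow> gset M (i + int M * t) = gset M i"
  unfolding gset_def by (metis add.commute diff_add_eq mod_mult_self2 mult.commute)

lemma gset_id: "v \<in> {1..M} \<Longrightarrow> gset M (int v) = v"
  unfolding gset_def by (auto simp: zmod_trivial_iff nat_diff_distrib)

lemma gobs_per: "M > 0 \<Longrightarrow> gobs M q (i + int M * t) a = gobs M q i a + t"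
proof -
  assume M: "M > 0"
  have h: "i + int M * t - 1 = (i - 1) + t * int M" by (simp add: algebra_simps)
  have "(i + int M * t - 1) div int M = ((i - 1) + t * int M) div int M" by (subst h) (rule refl)
  also have "\<dots> = t + (i - 1) div int M"
    by (rule div_mult_self1) (use M in simp)
  finally have "(i + int M * t - 1) div int M = t + (i - 1) div int M" .
  then show ?thesis unfolding gobs_def by simp
qed

lemma gobs_id: "v \<in> {1..M} \<Longrightarrow> gobs M q (int v) a = int (a q)"
  unfolding gobs_def by (auto simp: div_pos_pos_trivial)

lemma mod_triangle: "d > 0 \<Longrightarrow> ((u + v) mod int d) \<le> u mod int d + v mod int d"
proof -
  assume d: "d > 0"
  have "(u + v) mod int d = (u mod int d + v mod int d) mod int d" by (simp add: mod_add_eq)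
  also have "\<dots> \<le> u mod int d + v mod int d"
    by (rule zmod_le_nonneg_dividend) (use d in auto)
  finally show ?thesis .
qed

lemma mod_pair: "d > 0 \<Longrightarrow> (w - 1) mod int d + (- w) mod int d = int d - 1"
proof -
  assume d: "d > 0"
  show ?thesis
  proof (cases "w mod int d = 0")
    case True
    have a: "(- w) mod int d = 0" using True by (simp add: zmod_zminus1_eq_if)
    have b: "(w - 1) mod int d = (w mod int d - 1) mod int d" by (simp add: mod_diff_left_eq)
    also have "\<dots> = int d - 1" using True d by (simp add: zmod_minus1)
    finally show ?thesis using a by simp
  next
    case False
    have a: "(- w) mod int d = int d - w mod int d" using False by (simp add: zmod_zminus1_eq_if)
    have e: "0 \<le> w mod int d" "w mod int d < int d" using d by auto
    have c: "0 \<le> w mod int d - 1" "w mod int d - 1 < int d" using False e by linarith+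
    have b: "(w - 1) mod int d = (w mod int d - 1) mod int d" by (simp add: mod_diff_left_eq)
    also have "\<dots> = w mod int d - 1" using c by (simp add: mod_pos_pos_trivial)
    finally show ?thesis using a by simp
  qed
qed


lemma fin_out: "finite (outcomes n d)"
  unfolding outcomes_def by (auto intro: finite_PiE)

lemma Ex_mono:
  assumes "is_behaviour n M d p" "x \<in> settings n M" "\<And>a. a \<in> outcomes n d \<Longrightarrow> F a \<le> G a"
  shows "EE n d p x F \<le> EE n d p x G"
  unfolding EE_def
proof (rule sum_mono)
  fix a assume a: "a \<in> outcomes n d"
  have "0 \<le> p a x" using assms(1,2) a unfolding is_behaviour_def by auto
  then show "p a x * F a \<le> p a x * G a" using assms(3)[OF a] by (simp add: mult_left_mono)
qed

lemma Ex_diff: "EE n d p x (\<lambda>a. F a - G a) = EE n d p x F - EE n d p x G"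
  unfolding EE_def by (simp add: right_diff_distrib sum_subtractf)

lemma Ex_add: "EE n d p x (\<lambda>a. F a + G a) = EE n d p x F + EE n d p x G"
  unfolding EE_def by (simp add: distrib_left sum.distrib)

lemma Ex_const:
  assumes "is_behaviour n M d p" "x \<in> settings n M"
  shows "EE n d p x (\<lambda>a. c) = c"
proof -
  have "(\<Sum>a\<in>outcomes n d. p a x) = 1" using assms unfolding is_behaviour_def by auto
  then show ?thesis unfolding EE_def by (simp add: sum_distrib_right[symmetric])
qed

lemma Ex_ns:
  assumes ns: "nonsignalling n M d p" and S: "S \<subseteq> {0..<n}"
    and x: "x \<in> settings n M" and x': "x' \<in> settings n M"
    and agree: "\<And>i. i \<in> S \<Longrightarrow> x i = x' i"
    and F: "\<And>a b. a \<in> outcomes n d \<Longrightarrow> b \<in> outcomes n d \<Longrightarrow> (\<And>i. i \<in> S \<Longrightarrow> a i = b i) \<Longrightarrow> F a = F b"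
  shows "EE n d p x F = EE n d p x' F"
proof -
  define Ou where "Ou = outcomes n d"
  define cls where "cls a = {b\<in>Ou. \<forall>i\<in>S. b i = a i}" for a
  have finO: "finite Ou" unfolding Ou_def by (rule fin_out)
  have fincls: "finite (cls a)" for a unfolding cls_def using finO by auto
  have self: "a \<in> Ou \<Longrightarrow> a \<in> cls a" for a unfolding cls_def by auto
  have cpos: "a \<in> Ou \<Longrightarrow> card (cls a) > 0" for a
  proof -
    assume a: "a \<in> Ou"
    have "cls a \<noteq> {}" using self[OF a] by auto
    then show ?thesis using fincls[of a] by (simp add: card_gt_0_iff)
  qed
  have clseq: "a \<in> cls b \<Longrightarrow> cls a = cls b" for a b unfolding cls_def by auto
  have sym: "a \<in> Ou \<Longrightarrow> b \<in> Ou \<Longrightarrow> (b \<in> cls a) = (a \<in> cls b)" for a b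
    unfolding cls_def by auto
  have Fcls: "a \<in> cls b \<Longrightarrow> b \<in> Ou \<Longrightarrow> F a = F b" for a b
  proof -
    assume h: "a \<in> cls b" "b \<in> Ou"
    have h2: "a \<in> outcomes n d" "b \<in> outcomes n d" "\<And>i. i \<in> S \<Longrightarrow> a i = b i"
      using h unfolding cls_def Ou_def by auto
    show "F a = F b" by (rule F[OF h2(1) h2(2) h2(3)])
  qed
  have key: "EE n d p z F = (\<Sum>a\<in>Ou. (F a / card (cls a)) * (\<Sum>b\<in>cls a. p b z))" for z
  proof -
    have "(\<Sum>a\<in>Ou. (F a / card (cls a)) * (\<Sum>b\<in>cls a. p b z))
        = (\<Sum>a\<in>Ou. \<Sum>b\<in>Ou. if b \<in> cls a then F a / card (cls a) * p b z else 0)"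
    proof (rule sum.cong[OF refl])
      fix a assume "a \<in> Ou"
      have "cls a \<subseteq> Ou" unfolding cls_def by auto
      then have "(\<Sum>b\<in>Ou. if b \<in> cls a then F a / card (cls a) * p b z else 0)
          = (\<Sum>b\<in>cls a. F a / card (cls a) * p b z)"
        by (subst sum.inter_restrict[OF finO, symmetric]) (simp add: Int_absorb1 Int_absorb2)
      then show "(F a / card (cls a)) * (\<Sum>b\<in>cls a. p b z)
          = (\<Sum>b\<in>Ou. if b \<in> cls a then F a / card (cls a) * p b z else 0)"
        by (simp add: sum_distrib_left)
    qed
    also have "\<dots> = (\<Sum>b\<in>Ou. \<Sum>a\<in>Ou. if b \<in> cls a then F a / card (cls a) * p b z else 0)"
      by (rule sum.swap)
    also have "\<dots> = (\<Sum>b\<in>Ou. p b z * F b)"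
    proof (rule sum.cong[OF refl])
      fix b assume b: "b \<in> Ou"
      have "(\<Sum>a\<in>Ou. if b \<in> cls a then F a / card (cls a) * p b z else 0)
          = (\<Sum>a\<in>Ou. if a \<in> cls b then F b / card (cls b) * p b z else 0)"
      proof (rule sum.cong[OF refl])
        fix a assume a: "a \<in> Ou"
        show "(if b \<in> cls a then F a / card (cls a) * p b z else 0)
            = (if a \<in> cls b then F b / card (cls b) * p b z else 0)"
        proof (cases "a \<in> cls b")
          case True
          then have "b \<in> cls a" using sym[OF a b] by simp
          moreover have "cls a = cls b" using clseq[OF True] .
          moreover have "F a = F b" using Fcls[OF True b] .
          ultimately show ?thesis using True by simp
        next
          case False
          then have "b \<notin> cls a" using sym[OF a b] by simp
          then show ?thesis using False by simp
        qed
      qed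
      also have "\<dots> = (\<Sum>a\<in>cls b. F b / card (cls b) * p b z)"
      proof -
        have "cls b \<subseteq> Ou" unfolding cls_def by auto
        then show ?thesis by (subst sum.inter_restrict[OF finO, symmetric]) (simp add: Int_absorb1 Int_absorb2)
      qed
      also have "\<dots> = p b z * F b" using cpos[OF b] by simp
      finally show "(\<Sum>a\<in>Ou. if b \<in> cls a then F a / card (cls a) * p b z else 0) = p b z * F b" .
    qed
    finally show ?thesis unfolding EE_def Ou_def by simp
  qed
  have ns': "\<forall>a\<in>outcomes n d.
           (\<Sum>b\<in>{b\<in>outcomes n d. \<forall>i\<in>S. b i = a i}. p b x) =
           (\<Sum>b\<in>{b\<in>outcomes n d. \<forall>i\<in>S. b i = a i}. p b x')"
  proof -
    have "\<forall>S \<subseteq> {0..<n}. \<forall>x\<in>settings n M. \<forall>x'\<in>settings n M.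
        (\<forall>i\<in>S. x i = x' i) \<longrightarrow>
        (\<forall>a\<in>outcomes n d.
           (\<Sum>b\<in>{b\<in>outcomes n d. \<forall>i\<in>S. b i = a i}. p b x) =
           (\<Sum>b\<in>{b\<in>outcomes n d. \<forall>i\<in>S. b i = a i}. p b x'))"
      using ns unfolding nonsignalling_def .
    note nsr = this[rule_format]
    have ag: "\<forall>i\<in>S. x i = x' i" using agree by blast
    show ?thesis
    proof
      fix a assume a: "a \<in> outcomes n d"
      show "(\<Sum>b\<in>{b\<in>outcomes n d. \<forall>i\<in>S. b i = a i}. p b x) =
           (\<Sum>b\<in>{b\<in>outcomes n d. \<forall>i\<in>S. b i = a i}. p b x')"
        by (rule nsr[OF S x x' agree a])
    qed
  qed
  have eqs: "a \<in> Ou \<Longrightarrow> (\<Sum>b\<in>cls a. p b x) = (\<Sum>b\<in>cls a. p b x')" for a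
  proof -
    assume a: "a \<in> Ou"
    show ?thesis unfolding cls_def Ou_def using ns' a unfolding Ou_def by blast
  qed
  show ?thesis
    by (simp only: key, rule sum.cong[OF refl], simp only: eqs)
qed


lemma find_app: "find P (xs @ ys) = (case find P xs of None \<Rightarrow> find P ys | Some x \<Rightarrow> Some x)"
  by (induction xs) auto

lemma find_map_upt:
  "find (\<lambda>(k, j, c). k = i) (map (\<lambda>m. (m, J m, C m)) [0..<N]) = (if i < N then Some (i, J i, C i) else None)"
proof (induction N)
  case 0 then show ?case by simp
next
  case (Suc N)
  show ?case using Suc by (auto simp: find_app less_Suc_eq)
qed

lemma sum_list_map_upt:
  "(\<Sum>(k, j, c)\<leftarrow>map (\<lambda>m. (m, J m, C m)) [0..<N]. f k j c) = (\<Sum>m<N. f m (J m) (C m))"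
  by (induction N) auto

lemma obs_setting_gset: "j \<ge> 1 \<Longrightarrow> obs_setting M j = gset M (int j)"
  unfolding obs_setting_def gset_def by (simp add: nat_mod_distrib of_nat_diff nat_diff_distrib)

lemma obs_shift_gobs: "j \<ge> 1 \<Longrightarrow> int (a m) + obs_shift M j = gobs M m (int j) a"
  unfolding obs_shift_def gobs_def by (simp add: zdiv_int of_nat_diff)

definition XJ :: "nat \<Rightarrow> nat \<Rightarrow> nat \<Rightarrow> (nat \<Rightarrow> int) \<Rightarrow> nat \<Rightarrow> nat" where
  "XJ N M y J = restrict (\<lambda>i. if i < N then gset M (J i) else y) {0..<Suc N}"

definition VV :: "nat \<Rightarrow> nat \<Rightarrow> (nat \<Rightarrow> int) \<Rightarrow> (nat \<Rightarrow> nat) \<Rightarrow> int" where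
  "VV N M J a = (\<Sum>m<N. (-1)^m * gobs M m (J m) a)"

lemma XJ_set: "M > 0 \<Longrightarrow> y \<in> {1..M} \<Longrightarrow> XJ N M y J \<in> settings (Suc N) M"
  unfolding XJ_def settings_def using gset_range by auto

lemma expval_map:
  assumes M: "M > 0" and ns: "nonsignalling (Suc N) M d p"
    and y: "y \<in> {1..M}" and J: "\<And>m. m < N \<Longrightarrow> J m \<ge> 1"
  shows "expval (Suc N) M d p (map (\<lambda>m. (m, J m, s * (-1)^m)) [0..<N])
       = EE (Suc N) d p (XJ N M y (\<lambda>m. int (J m))) (\<lambda>a. md d (s * VV N M (\<lambda>m. int (J m)) a))"
proof -
  define x0 where "x0 = restrict (\<lambda>i. if i < N then obs_setting M (J i) else 1) {0..<Suc N}"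
  have ts: "term_setting (Suc N) M (map (\<lambda>m. (m, J m, s * (-1)^m)) [0..<N]) = x0"
    unfolding term_setting_def x0_def
    by (rule restrict_ext) (simp add: find_map_upt)
  have "expval (Suc N) M d p (map (\<lambda>m. (m, J m, s * (-1)^m)) [0..<N])
      = EE (Suc N) d p x0 (\<lambda>a. md d (\<Sum>m<N. (s * (-1)^m) * (int (a m) + obs_shift M (J m))))"
    unfolding expval_def EE_def md_def ts sum_list_map_upt by simp
  also have "\<dots> = EE (Suc N) d p x0 (\<lambda>a. md d (s * VV N M (\<lambda>m. int (J m)) a))"
  proof -
    have "(\<Sum>m<N. (s * (-1)^m) * (int (a m) + obs_shift M (J m))) = s * VV N M (\<lambda>m. int (J m)) a" for a
      unfolding VV_def sum_distrib_left
    proof (rule sum.cong[OF refl])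
      fix m assume "m \<in> {..<N}"
      then have "int (a m) + obs_shift M (J m) = gobs M m (int (J m)) a"
        using J by (intro obs_shift_gobs) auto
      then show "(s * (-1)^m) * (int (a m) + obs_shift M (J m)) = s * ((-1)^m * gobs M m (int (J m)) a)"
        by simp
    qed
    then show ?thesis by simp
  qed
  also have "\<dots> = EE (Suc N) d p (XJ N M y (\<lambda>m. int (J m))) (\<lambda>a. md d (s * VV N M (\<lambda>m. int (J m)) a))"
  proof (rule Ex_ns[OF ns, of "{0..<N}"])
    show "{0..<N} \<subseteq> {0..<Suc N}" by auto
    show "x0 \<in> settings (Suc N) M" unfolding x0_def settings_def obs_setting_def
      using M by (auto simp: Suc_le_eq)
    show "XJ N M y (\<lambda>m. int (J m)) \<in> settings (Suc N) M" by (rule XJ_set[OF M y])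
    show "x0 i = XJ N M y (\<lambda>m. int (J m)) i" if "i \<in> {0..<N}" for i
      using that J unfolding x0_def XJ_def by (simp add: obs_setting_gset)
    show "md d (s * VV N M (\<lambda>m. int (J m)) a) = md d (s * VV N M (\<lambda>m. int (J m)) b)"
      if "\<And>i. i \<in> {0..<N} \<Longrightarrow> a i = b i" for a b
    proof -
      have "VV N M (\<lambda>m. int (J m)) a = VV N M (\<lambda>m. int (J m)) b"
        unfolding VV_def gobs_def using that by (intro sum.cong) auto
      then show ?thesis by simp
    qed
  qed
  finally show ?thesis .
qed

definition JN1 :: "nat \<Rightarrow> (nat \<Rightarrow> nat) \<Rightarrow> nat \<Rightarrow> nat" where
  "JN1 N \<alpha> m = (if m = 0 then \<alpha> 1 else if m = N - 1 then \<alpha> (N - 1) else \<alpha> m + \<alpha> (Suc m) - 1)"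

lemma S_terms_eq:
  assumes "N \<ge> 2"
  shows "S_terms N \<alpha> s = map (\<lambda>m. (m, JN1 N \<alpha> m, s * (-1)^m)) [1..<N]"
proof -
  have u: "[2..<N] = map Suc [1..<N-1]" using assms by (simp add: map_Suc_upt numeral_2_eq_2)
  have v: "[1..<N] = [1..<N-1] @ [N-1]"
  proof -
    obtain K where K: "N = Suc K" "K \<ge> 1" using assms by (cases N) auto
    then show ?thesis by (simp add: upt_Suc)
  qed
  show ?thesis
    unfolding S_terms_def u v using assms
    by (auto simp: JN1_def)
qed

lemma term1_eq:
  assumes "N \<ge> 2"
  shows "(0, \<alpha> 1, 1) # S_terms N \<alpha> 1 = map (\<lambda>m. (m, JN1 N \<alpha> m, 1 * (-1)^m)) [0..<N]"
  using assms by (simp add: S_terms_eq upt_conv_Cons JN1_def)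

definition JN2 :: "nat \<Rightarrow> (nat \<Rightarrow> nat) \<Rightarrow> nat \<Rightarrow> nat" where
  "JN2 N \<alpha> m = (if m = 0 then \<alpha> 1 + 1 else JN1 N \<alpha> m)"

lemma term2_eq:
  assumes "N \<ge> 2"
  shows "(0, \<alpha> 1 + 1, -1) # S_terms N \<alpha> (-1) = map (\<lambda>m. (m, JN2 N \<alpha> m, (-1) * (-1)^m)) [0..<N]"
proof -
  have "map (\<lambda>m. (m, JN1 N \<alpha> m, (-1) * (-1)^m)) [1..<N] = map (\<lambda>m. (m, JN2 N \<alpha> m, (-1) * (-1)^m)) [1..<N]"
    by (auto simp: JN2_def)
  then show ?thesis using assms by (simp add: S_terms_eq upt_conv_Cons JN2_def)
qed


lemma VV_cong: "(\<And>m. m < N \<Longrightarrow> J m = J' m) \<Longrightarrow> VV N M J a = VV N M J' a"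
  unfolding VV_def by (intro sum.cong) auto

lemma XJ_cong: "(\<And>m. m < N \<Longrightarrow> J m = J' m) \<Longrightarrow> XJ N M y J = XJ N M y J'"
  unfolding XJ_def by (intro restrict_ext) auto

lemma VV_shift:
  assumes M: "M > 0" and t0: "t 0 = 0" and tN: "t N = 0"
  shows "VV N M (\<lambda>m. J m - int M * (t m + t (Suc m))) a = VV N M J a"
proof -
  have g: "gobs M m (J m - int M * (t m + t (Suc m))) a = gobs M m (J m) a - (t m + t (Suc m))" for m
  proof -
    have eq: "J m - int M * (t m + t (Suc m)) = J m + int M * (-(t m + t (Suc m)))" by (simp add: algebra_simps)
    show ?thesis unfolding eq by (subst gobs_per[OF M]) (simp add: algebra_simps)
  qed
  define u where "u m = (-1::int)^m * t m" for m
  have "(\<Sum>m<N. (-1::int)^m * (t m + t (Suc m))) = (\<Sum>m<N. u m - u (Suc m))"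
    unfolding u_def by (intro sum.cong) (auto simp: algebra_simps)
  also have "\<dots> = u 0 - u N" by (rule sum_lessThan_telescope')
  also have "\<dots> = 0" unfolding u_def using t0 tN by simp
  finally have z: "(\<Sum>m<N. (-1::int)^m * (t m + t (Suc m))) = 0" .
  have "VV N M (\<lambda>m. J m - int M * (t m + t (Suc m))) a
      = (\<Sum>m<N. (-1)^m * gobs M m (J m) a - (-1::int)^m * (t m + t (Suc m)))"
    unfolding VV_def g by (intro sum.cong) (auto simp: algebra_simps)
  also have "\<dots> = VV N M J a - (\<Sum>m<N. (-1::int)^m * (t m + t (Suc m)))"
    unfolding VV_def by (simp add: sum_subtractf)
  finally show ?thesis using z by simp
qed

lemma XJ_shift:
  assumes M: "M > 0"
  shows "XJ N M y (\<lambda>m. J m - int M * (t m)) = XJ N M y J"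
proof -
  have h: "gset M (J m - int M * t m) = gset M (J m)" for m
  proof -
    have eq: "J m - int M * t m = J m + int M * (- t m)" by simp
    show ?thesis unfolding eq by (rule gset_per[OF M])
  qed
  show ?thesis unfolding XJ_def h by (rule refl)
qed

locale ctx =
  fixes N M d k y :: nat and p :: "(nat \<Rightarrow> nat) \<Rightarrow> (nat \<Rightarrow> nat) \<Rightarrow> real"
  assumes N2: "N \<ge> 2" and M2: "M \<ge> 2" and d2: "d \<ge> 2"
    and beh: "is_behaviour (Suc N) M d p" and ns: "nonsignalling (Suc N) M d p"
    and kN: "k < N" and y: "y \<in> {1..M}"
begin

lemma M0: "M > 0" using M2 by simp

abbreviation box where "box \<equiv> {1..N-1} \<rightarrow>\<^sub>E {1..M}"

definition dl :: "nat \<Rightarrow> int" where "dl i = (if i \<le> k then (-1)^i else 0)"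

definition beta :: "(nat \<Rightarrow> nat) \<Rightarrow> nat \<Rightarrow> nat" where
  "beta \<alpha> = restrict (\<lambda>i. gset M (int (\<alpha> i) + dl i)) {1..N-1}"

definition betai :: "(nat \<Rightarrow> nat) \<Rightarrow> nat \<Rightarrow> nat" where
  "betai \<alpha> = restrict (\<lambda>i. gset M (int (\<alpha> i) - dl i)) {1..N-1}"

definition tt :: "(nat \<Rightarrow> nat) \<Rightarrow> nat \<Rightarrow> int" where
  "tt \<alpha> i = (if 1 \<le> i \<and> i \<le> N - 1 then (int (\<alpha> i) + dl i - 1) div int M else 0)"

definition J1 :: "(nat \<Rightarrow> nat) \<Rightarrow> nat \<Rightarrow> int" where "J1 \<alpha> m = int (JN1 N \<alpha> m)"
definition J2 :: "(nat \<Rightarrow> nat) \<Rightarrow> nat \<Rightarrow> int" where "J2 \<alpha> m = int (JN2 N \<alpha> m)"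

lemma beta_in: "beta \<alpha> \<in> box"
  unfolding beta_def using gset_range[OF M0] by auto

lemma betai_in: "betai \<alpha> \<in> box"
  unfolding betai_def using gset_range[OF M0] by auto

lemma gset_cancel: "v \<in> {1..M} \<Longrightarrow> gset M (int (gset M (int v + e)) - e) = v"
proof -
  assume v: "v \<in> {1..M}"
  have "int (gset M (int v + e)) - e = int v + int M * (- ((int v + e - 1) div int M))"
    using gset_int[OF M0, of "int v + e"] by simp
  then show ?thesis by (simp only: gset_per[OF M0] gset_id[OF v])
qed

lemma betai_beta: "\<alpha> \<in> box \<Longrightarrow> betai (beta \<alpha>) = \<alpha>"
proof (rule ext)
  fix i assume a: "\<alpha> \<in> box"
  show "betai (beta \<alpha>) i = \<alpha> i"
  proof (cases "i \<in> {1..N-1}")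
    case True
    then have "\<alpha> i \<in> {1..M}" using a by auto
    then show ?thesis using True unfolding betai_def beta_def by (simp add: gset_cancel)
  next
    case False
    then show ?thesis using a unfolding betai_def beta_def by (auto simp: PiE_def extensional_def)
  qed
qed

lemma beta_betai: "\<alpha> \<in> box \<Longrightarrow> beta (betai \<alpha>) = \<alpha>"
proof (rule ext)
  fix i assume a: "\<alpha> \<in> box"
  show "beta (betai \<alpha>) i = \<alpha> i"
  proof (cases "i \<in> {1..N-1}")
    case True
    then have "\<alpha> i \<in> {1..M}" using a by auto
    then show ?thesis using True gset_cancel[of "\<alpha> i" "- dl i"] unfolding betai_def beta_def by simp
  next
    case False
    then show ?thesis using a unfolding betai_def beta_def by (auto simp: PiE_def extensional_def)
  qed
qed

lemma beta_bij: "bij_betw beta box box"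
proof (rule bij_betw_byWitness[where f'=betai])
  show "\<forall>a\<in>box. betai (beta a) = a" using betai_beta by blast
  show "\<forall>a\<in>box. beta (betai a) = a" using beta_betai by blast
  show "beta ` box \<subseteq> box" using beta_in by blast
  show "betai ` box \<subseteq> box" using betai_in by blast
qed

lemma beta_int: "i \<in> {1..N-1} \<Longrightarrow> int (beta \<alpha> i) = int (\<alpha> i) + dl i - int M * tt \<alpha> i"
  unfolding beta_def tt_def using gset_int[OF M0] by auto

lemma KEY:
  assumes a: "\<alpha> \<in> box" and m: "m < N"
  shows "J2 (beta \<alpha>) m = J1 \<alpha> m + (if m = k then (-1)^k else 0) - int M * (tt \<alpha> m + tt \<alpha> (Suc m))"
proof -
  have b1: "beta \<alpha> i \<ge> 1" if "i \<in> {1..N-1}" for i using PiE_mem[OF beta_in that] by auto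
  have a1: "\<alpha> i \<ge> 1" if "i \<in> {1..N-1}" for i using PiE_mem[OF a that] by auto
  have tt0: "tt \<alpha> 0 = 0" unfolding tt_def by simp
  have ttN: "tt \<alpha> N = 0" unfolding tt_def using N2 by simp
  consider (z) "m = 0" | (l) "m \<noteq> 0" "m = N - 1" | (mid) "m \<noteq> 0" "m \<noteq> N - 1" by blast
  then show ?thesis
  proof cases
    case z
    have "1 \<in> {1..N-1}" using N2 by auto
    then have "J2 (beta \<alpha>) m = int (\<alpha> 1) + dl 1 - int M * tt \<alpha> 1 + 1"
      using z beta_int[of 1 \<alpha>] unfolding J2_def JN2_def by simp
    moreover have "J1 \<alpha> m = int (\<alpha> 1)" using z unfolding J1_def JN1_def by simp
    moreover have "dl 1 + 1 = (if m = k then (-1)^k else 0)"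
      using z unfolding dl_def by auto
    ultimately show ?thesis using z tt0 by simp
  next
    case l
    have i: "N - 1 \<in> {1..N-1}" using N2 by auto
    have "J2 (beta \<alpha>) m = int (\<alpha> (N-1)) + dl (N-1) - int M * tt \<alpha> (N-1)"
      using l beta_int[OF i, of \<alpha>] unfolding J2_def JN2_def JN1_def by simp
    moreover have "J1 \<alpha> m = int (\<alpha> (N-1))" using l unfolding J1_def JN1_def by simp
    moreover have "dl (N-1) = (if m = k then (-1)^k else 0)"
      using l kN unfolding dl_def by auto
    moreover have "Suc m = N" using l N2 by simp
    ultimately show ?thesis using l ttN by simp
  next
    case mid
    have i1: "m \<in> {1..N-1}" and i2: "Suc m \<in> {1..N-1}" using mid m by auto
    have "J2 (beta \<alpha>) m = int (beta \<alpha> m) + int (beta \<alpha> (Suc m)) - 1"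
      using mid b1[OF i1] unfolding J2_def JN2_def JN1_def by (simp add: of_nat_diff)
    also have "\<dots> = int (\<alpha> m) + int (\<alpha> (Suc m)) - 1 + (dl m + dl (Suc m)) - int M * (tt \<alpha> m + tt \<alpha> (Suc m))"
      using beta_int[OF i1, of \<alpha>] beta_int[OF i2, of \<alpha>] by (simp add: algebra_simps)
    also have "int (\<alpha> m) + int (\<alpha> (Suc m)) - 1 = J1 \<alpha> m"
      using mid a1[OF i1] unfolding J1_def JN1_def by (simp add: of_nat_diff)
    also have "dl m + dl (Suc m) = (if m = k then (-1)^k else 0)"
      unfolding dl_def by auto
    finally show ?thesis .
  qed
qed

end

lemma md_tri: "d > 0 \<Longrightarrow> md d (u + v) \<le> md d u + md d v"
  unfolding md_def using mod_triangle[of d u v] by linarith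

context ctx
begin

lemma d0: "d > 0" using d2 by simp

definition XK :: "int \<Rightarrow> nat \<Rightarrow> nat" where
  "XK z = restrict (\<lambda>q. if q = k then gset M z else if q = N then y else 1) {0..<Suc N}"

definition H :: "int \<Rightarrow> int \<Rightarrow> real" where
  "H z c = EE (Suc N) d p (XK z) (\<lambda>a. md d ((-1)^k * (int (a N) + c) - (-1)^k * gobs M k z a))"

lemma XK_set: "XK z \<in> settings (Suc N) M"
  unfolding XK_def settings_def using gset_range[OF M0] y M0 by auto

lemma H_per: "H (z + int M * t) (c + t) = H z c"
proof -
  have "XK (z + int M * t) = XK z" unfolding XK_def gset_per[OF M0] ..
  moreover have "(-1)^k * (int (a N) + (c + t)) - (-1)^k * gobs M k (z + int M * t) a
      = (-1)^k * (int (a N) + c) - (-1)^k * gobs M k z a" for a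
    unfolding gobs_per[OF M0] by (simp add: algebra_simps)
  ultimately show ?thesis unfolding H_def by simp
qed

lemma XJ_set': "XJ N M y J \<in> settings (Suc N) M" by (rule XJ_set[OF M0 y])

lemma PA:
  fixes J :: "nat \<Rightarrow> int" and c :: int
  defines "J' \<equiv> J(k := J k + (-1)^k)"
  shows "EE (Suc N) d p (XJ N M y J) (\<lambda>a. md d (1 * VV N M J a))
       + EE (Suc N) d p (XJ N M y J') (\<lambda>a. md d ((-1) * VV N M J' a))
       \<ge> H (J k + (-1)^k) c - H (J k) c"
proof -
  define s :: int where "s = (-1)^k"
  define R where "R a = (\<Sum>m\<in>{..<N} - {k}. (-1)^m * gobs M m (J m) a)" for a
  define Y where "Y a = gobs M k (J k) a" for a
  define Y' where "Y' a = gobs M k (J k + s) a" for a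
  define b where "b a = int (a N) + c" for a :: "nat \<Rightarrow> nat"
  define X1 where "X1 = XJ N M y J"
  define X2 where "X2 = XJ N M y J'"
  have kin: "k \<in> {..<N}" using kN by simp
  have VJ: "VV N M J a = s * Y a + R a" for a
    unfolding VV_def R_def Y_def s_def using sum.remove[OF finite_lessThan kin] by simp
  have RJ': "R a = (\<Sum>m\<in>{..<N} - {k}. (-1)^m * gobs M m (J' m) a)" for a
    unfolding R_def J'_def by (intro sum.cong) auto
  have VJ': "VV N M J' a = s * Y' a + R a" for a
    unfolding VV_def RJ' Y'_def s_def using sum.remove[OF finite_lessThan kin, of "\<lambda>m. (-1)^m * gobs M m (J' m) a"]
    by (simp add: J'_def)
  have X1s: "X1 \<in> settings (Suc N) M" unfolding X1_def by (rule XJ_set')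
  have X2s: "X2 \<in> settings (Suc N) M" unfolding X2_def by (rule XJ_set')
  have i1: "EE (Suc N) d p X1 (\<lambda>a. md d (1 * VV N M J a))
      \<ge> EE (Suc N) d p X1 (\<lambda>a. md d (s * b a + R a) - md d (s * b a - s * Y a))"
  proof (rule Ex_mono[OF beh X1s])
    fix a
    have "md d (s * b a + R a) = md d (VV N M J a + (s * b a - s * Y a))"
      unfolding VJ by (simp add: algebra_simps)
    also have "\<dots> \<le> md d (VV N M J a) + md d (s * b a - s * Y a)" by (rule md_tri[OF d0])
    finally show "md d (s * b a + R a) - md d (s * b a - s * Y a) \<le> md d (1 * VV N M J a)" by simp
  qed
  have i2: "EE (Suc N) d p X2 (\<lambda>a. md d ((-1) * VV N M J' a))
      \<ge> EE (Suc N) d p X2 (\<lambda>a. md d (s * b a - s * Y' a) - md d (s * b a + R a))"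
  proof (rule Ex_mono[OF beh X2s])
    fix a
    have "md d (s * b a - s * Y' a) = md d ((-1) * VV N M J' a + (s * b a + R a))"
      unfolding VJ' by (simp add: algebra_simps)
    also have "\<dots> \<le> md d ((-1) * VV N M J' a) + md d (s * b a + R a)" by (rule md_tri[OF d0])
    finally show "md d (s * b a - s * Y' a) - md d (s * b a + R a) \<le> md d ((-1) * VV N M J' a)" by simp
  qed
  have e3: "EE (Suc N) d p X1 (\<lambda>a. md d (s * b a + R a)) = EE (Suc N) d p X2 (\<lambda>a. md d (s * b a + R a))"
  proof (rule Ex_ns[OF ns, of "{0..<Suc N} - {k}"])
    show "{0..<Suc N} - {k} \<subseteq> {0..<Suc N}" by auto
    show "X1 \<in> settings (Suc N) M" by (rule X1s)
    show "X2 \<in> settings (Suc N) M" by (rule X2s)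
    show "X1 i = X2 i" if "i \<in> {0..<Suc N} - {k}" for i
      using that unfolding X1_def X2_def XJ_def J'_def by auto
    show "md d (s * b a + R a) = md d (s * b a' + R a')"
      if "\<And>i. i \<in> {0..<Suc N} - {k} \<Longrightarrow> a i = a' i" for a a'
    proof -
      have "b a = b a'" unfolding b_def using that[of N] kN by simp
      moreover have "R a = R a'" unfolding R_def gobs_def using that by (intro sum.cong) auto
      ultimately show ?thesis by simp
    qed
  qed
  have f4: "(\<lambda>a. md d (s * b a - s * Y a)) = (\<lambda>a. md d ((-1)^k * (int (a N) + c) - (-1)^k * gobs M k (J k) a))"
    unfolding s_def b_def Y_def ..
  have e4: "EE (Suc N) d p X1 (\<lambda>a. md d (s * b a - s * Y a)) = H (J k) c"
    unfolding H_def f4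
  proof (rule Ex_ns[OF ns, of "{k, N}"])
    show "{k, N} \<subseteq> {0..<Suc N}" using kN by auto
    show "X1 \<in> settings (Suc N) M" by (rule X1s)
    show "XK (J k) \<in> settings (Suc N) M" by (rule XK_set)
    show "X1 i = XK (J k) i" if "i \<in> {k, N}" for i
      using that kN unfolding X1_def XJ_def XK_def by auto
    show "md d ((-1)^k * (int (a N) + c) - (-1)^k * gobs M k (J k) a) = md d ((-1)^k * (int (a' N) + c) - (-1)^k * gobs M k (J k) a')"
      if "\<And>i. i \<in> {k, N} \<Longrightarrow> a i = a' i" for a a'
      using that[of k] that[of N] unfolding gobs_def by simp
  qed
  have f5: "(\<lambda>a. md d (s * b a - s * Y' a)) = (\<lambda>a. md d ((-1)^k * (int (a N) + c) - (-1)^k * gobs M k (J k + (-1)^k) a))"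
    unfolding s_def b_def Y'_def ..
  have e5: "EE (Suc N) d p X2 (\<lambda>a. md d (s * b a - s * Y' a)) = H (J k + (-1)^k) c"
    unfolding H_def f5
  proof (rule Ex_ns[OF ns, of "{k, N}"])
    show "{k, N} \<subseteq> {0..<Suc N}" using kN by auto
    show "X2 \<in> settings (Suc N) M" by (rule X2s)
    show "XK (J k + (-1)^k) \<in> settings (Suc N) M" by (rule XK_set)
    show "X2 i = XK (J k + (-1)^k) i" if "i \<in> {k, N}" for i
      using that kN unfolding X2_def XJ_def XK_def J'_def by auto
    show "md d ((-1)^k * (int (a N) + c) - (-1)^k * gobs M k (J k + (-1)^k) a) = md d ((-1)^k * (int (a' N) + c) - (-1)^k * gobs M k (J k + (-1)^k) a')"
      if "\<And>i. i \<in> {k, N} \<Longrightarrow> a i = a' i" for a a'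
      using that[of k] that[of N] unfolding gobs_def by simp
  qed
  show ?thesis
    using i1 i2 e3 e4 e5 unfolding X1_def X2_def Ex_diff by linarith
qed

end

context ctx
begin

abbreviation T1 where "T1 \<alpha> \<equiv> expval (Suc N) M d p ((0, \<alpha> 1, 1) # S_terms N \<alpha> 1)"
abbreviation T2 where "T2 \<alpha> \<equiv> expval (Suc N) M d p ((0, \<alpha> 1 + 1, -1) # S_terms N \<alpha> (-1))"

lemma JN1_pos: assumes "\<alpha> \<in> box" "m < N" shows "JN1 N \<alpha> m \<ge> 1"
proof -
  have "\<alpha> i \<ge> 1" if "i \<in> {1..N-1}" for i using PiE_mem[OF assms(1) that] by auto
  moreover have "1 \<in> {1..N-1}" "N - 1 \<in> {1..N-1}" using N2 by auto
  ultimately show ?thesis using assms(2) unfolding JN1_def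
  proof (cases "m = 0"; cases "m = N - 1")
    assume h: "m \<noteq> 0" "m \<noteq> N - 1" "\<And>i. i \<in> {1..N-1} \<Longrightarrow> \<alpha> i \<ge> 1"
    have "\<alpha> m \<ge> 1" using h assms(2) by auto
    moreover have "\<alpha> (Suc m) \<ge> 1" using h assms(2) by auto
    ultimately show "1 \<le> (if m = 0 then \<alpha> 1 else if m = N - 1 then \<alpha> (N - 1) else \<alpha> m + \<alpha> (Suc m) - 1)"
      using h by simp
  qed auto
qed

lemma JN2_pos: assumes "\<alpha> \<in> box" "m < N" shows "JN2 N \<alpha> m \<ge> 1"
  using JN1_pos[OF assms] unfolding JN2_def by auto

lemma J1_eta: "J1 \<alpha> = (\<lambda>m. int (JN1 N \<alpha> m))" by (rule ext) (simp add: J1_def)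
lemma J2_eta: "J2 \<alpha> = (\<lambda>m. int (JN2 N \<alpha> m))" by (rule ext) (simp add: J2_def)

lemma T1_eq: assumes "\<alpha> \<in> box"
  shows "T1 \<alpha> = EE (Suc N) d p (XJ N M y (J1 \<alpha>)) (\<lambda>a. md d (1 * VV N M (J1 \<alpha>) a))"
  unfolding term1_eq[OF N2] J1_eta
  by (rule expval_map[OF M0 ns y]) (rule JN1_pos[OF assms])

lemma T2_eq: assumes "\<alpha> \<in> box"
  shows "T2 \<alpha> = EE (Suc N) d p (XJ N M y (J2 \<alpha>)) (\<lambda>a. md d ((-1) * VV N M (J2 \<alpha>) a))"
  unfolding term2_eq[OF N2] J2_eta
  by (rule expval_map[OF M0 ns y]) (rule JN2_pos[OF assms])

lemma T2_beta: assumes a: "\<alpha> \<in> box"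
  shows "T2 (beta \<alpha>) = EE (Suc N) d p (XJ N M y ((J1 \<alpha>)(k := J1 \<alpha> k + (-1)^k)))
            (\<lambda>a. md d ((-1) * VV N M ((J1 \<alpha>)(k := J1 \<alpha> k + (-1)^k)) a))"
proof -
  define J' where "J' = (J1 \<alpha>)(k := J1 \<alpha> k + (-1)^k)"
  define t where "t m = tt \<alpha> m + tt \<alpha> (Suc m)" for m
  have K: "J2 (beta \<alpha>) m = J' m - int M * t m" if "m < N" for m
    using KEY[OF a that] unfolding J'_def t_def by auto
  have X: "XJ N M y (J2 (beta \<alpha>)) = XJ N M y J'"
  proof -
    have "XJ N M y (J2 (beta \<alpha>)) = XJ N M y (\<lambda>m. J' m - int M * t m)"
      by (rule XJ_cong) (rule K)
    also have "\<dots> = XJ N M y J'" by (rule XJ_shift[OF M0])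
    finally show ?thesis .
  qed
  have tt0: "tt \<alpha> 0 = 0" unfolding tt_def by simp
  have ttN: "tt \<alpha> N = 0" unfolding tt_def using N2 by simp
  have V: "VV N M (J2 (beta \<alpha>)) a = VV N M J' a" for a
  proof -
    have "VV N M (J2 (beta \<alpha>)) a = VV N M (\<lambda>m. J' m - int M * (tt \<alpha> m + tt \<alpha> (Suc m))) a"
      by (rule VV_cong) (use K in \<open>auto simp: t_def\<close>)
    also have "\<dots> = VV N M J' a" by (rule VV_shift[OF M0]) (use tt0 ttN in auto)
    finally show ?thesis .
  qed
  show ?thesis
    unfolding T2_eq[OF beta_in] X V J'_def[symmetric] ..
qed

definition cc :: "nat \<Rightarrow> nat \<Rightarrow> int" where
  "cc x r = (if even k then (if r < x then -1 else 0) else (if r \<le> x then 0 else 1))"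

definition gg :: "nat \<Rightarrow> nat \<Rightarrow> real" where
  "gg x r = H (int r + (-1)^k) (cc x r) - H (int r) (cc x r)"

lemma per_alpha: assumes a: "\<alpha> \<in> box"
  shows "T1 \<alpha> + T2 (beta \<alpha>) \<ge> gg x (gset M (J1 \<alpha> k))"
proof -
  define z where "z = J1 \<alpha> k"
  define r where "r = gset M z"
  define t where "t = (z - 1) div int M"
  have zr: "z = int r + int M * t" unfolding r_def t_def using gset_int[OF M0, of z] by simp
  have "T1 \<alpha> + T2 (beta \<alpha>) \<ge> H (J1 \<alpha> k + (-1)^k) (cc x r + t) - H (J1 \<alpha> k) (cc x r + t)"
    unfolding T1_eq[OF a] T2_beta[OF a] by (rule PA)
  also have "H (J1 \<alpha> k + (-1)^k) (cc x r + t) = H (int r + (-1)^k) (cc x r)"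
  proof -
    have e: "J1 \<alpha> k + (-1)^k = (int r + (-1)^k) + int M * t" using zr unfolding z_def by simp
    show ?thesis unfolding e by (rule H_per)
  qed
  also have "H (J1 \<alpha> k) (cc x r + t) = H (int r) (cc x r)"
  proof -
    have e: "J1 \<alpha> k = int r + int M * t" using zr unfolding z_def by simp
    show ?thesis unfolding e by (rule H_per)
  qed
  finally show ?thesis unfolding gg_def r_def z_def .
qed

lemma gset_shift_bij: "bij_betw (\<lambda>v. gset M (int v + w)) {1..M} {1..M}"
proof (rule bij_betw_byWitness[where f'="\<lambda>r. gset M (int r - w)"])
  show "\<forall>a\<in>{1..M}. gset M (int (gset M (int a + w)) - w) = a" using gset_cancel by blast
  show "\<forall>a\<in>{1..M}. gset M (int (gset M (int a - w)) + w) = a"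
    using gset_cancel[of _ "- w"] by simp
  show "(\<lambda>v. gset M (int v + w)) ` {1..M} \<subseteq> {1..M}" using gset_range[OF M0] by blast
  show "(\<lambda>r. gset M (int r - w)) ` {1..M} \<subseteq> {1..M}" using gset_range[OF M0] by blast
qed

lemma CNT:
  fixes f :: "nat \<Rightarrow> real"
  shows "(\<Sum>\<alpha>\<in>box. f (gset M (J1 \<alpha> k))) = real M ^ (N - 2) * (\<Sum>r\<in>{1..M}. f r)"
proof -
  define i0 where "i0 = max 1 k"
  define I' where "I' = {1..N-1} - {i0}"
  have i0: "i0 \<in> {1..N-1}" unfolding i0_def using kN N2 by auto
  have ins: "{1..N-1} = insert i0 I'" unfolding I'_def using i0 by auto
  have nI: "i0 \<notin> I'" unfolding I'_def by auto
  define w where "w g = (if 1 \<le> k \<and> k < N - 1 then int (g (Suc k)) - 1 else 0)" for g :: "nat \<Rightarrow> nat"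
  have Jv: "J1 (g(i0 := v)) k = int v + w g" if g: "g \<in> I' \<rightarrow>\<^sub>E {1..M}" and v: "v \<in> {1..M}" for g v
  proof -
    consider (a) "k = 0" | (b) "k \<noteq> 0" "k = N - 1" | (c) "1 \<le> k" "k < N - 1" using kN by linarith
    then show ?thesis
    proof cases
      case a
      then show ?thesis unfolding J1_def JN1_def w_def i0_def by simp
    next
      case b
      then have "i0 = k" unfolding i0_def by simp
      then show ?thesis using b unfolding J1_def JN1_def w_def by simp
    next
      case c
      then have e: "i0 = k" unfolding i0_def by simp
      have "Suc k \<in> I'" unfolding I'_def using c e by auto
      then have "g (Suc k) \<ge> 1" using PiE_mem[OF g] by auto
      moreover have "v \<ge> 1" using v by simp
      ultimately show ?thesis using c e unfolding J1_def JN1_def w_def by (simp add: of_nat_diff)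
    qed
  qed
  have "(\<Sum>\<alpha>\<in>box. f (gset M (J1 \<alpha> k)))
      = (\<Sum>vg\<in>{1..M} \<times> (I' \<rightarrow>\<^sub>E {1..M}). f (gset M (J1 ((\<lambda>(v, g). g(i0 := v)) vg) k)))"
  proof -
    have "box = (\<lambda>(v, g). g(i0 := v)) ` ({1..M} \<times> (I' \<rightarrow>\<^sub>E {1..M}))"
      unfolding ins using PiE_insert_eq[of i0 I' "\<lambda>_. {1..M}"] by simp
    moreover have "inj_on (\<lambda>(v, g). g(i0 := v)) ({1..M} \<times> (I' \<rightarrow>\<^sub>E {1..M}))"
      using inj_combinator[OF nI, of "\<lambda>_. {1..M}"] by simp
    ultimately show ?thesis by (simp add: sum.reindex case_prod_unfold)
  qed
  also have "\<dots> = (\<Sum>v\<in>{1..M}. \<Sum>g\<in>I' \<rightarrow>\<^sub>E {1..M}. f (gset M (J1 (g(i0 := v)) k)))"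
    unfolding sum.cartesian_product by (intro sum.cong) auto
  also have "\<dots> = (\<Sum>g\<in>I' \<rightarrow>\<^sub>E {1..M}. \<Sum>v\<in>{1..M}. f (gset M (J1 (g(i0 := v)) k)))"
    by (rule sum.swap)
  also have "\<dots> = (\<Sum>g\<in>I' \<rightarrow>\<^sub>E {1..M}. \<Sum>r\<in>{1..M}. f r)"
  proof (rule sum.cong[OF refl])
    fix g assume g: "g \<in> I' \<rightarrow>\<^sub>E {1..M}"
    have "(\<Sum>v\<in>{1..M}. f (gset M (J1 (g(i0 := v)) k))) = (\<Sum>v\<in>{1..M}. f (gset M (int v + w g)))"
      by (rule sum.cong[OF refl]) (simp add: Jv[OF g])
    also have "\<dots> = (\<Sum>r\<in>{1..M}. f r)"
      by (rule sum.reindex_bij_betw[OF gset_shift_bij])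
    finally show "(\<Sum>v\<in>{1..M}. f (gset M (J1 (g(i0 := v)) k))) = (\<Sum>r\<in>{1..M}. f r)" .
  qed
  also have "\<dots> = real (card (I' \<rightarrow>\<^sub>E {1..M})) * (\<Sum>r\<in>{1..M}. f r)" by simp
  also have "card (I' \<rightarrow>\<^sub>E {1..M}) = M ^ (N - 2)"
  proof -
    have "card I' = N - 2" unfolding I'_def using i0 by auto
    then show ?thesis unfolding I'_def by (simp add: card_funcsetE)
  qed
  finally show ?thesis by simp
qed

end

context ctx
begin

lemma TEL:
  assumes x: "x \<in> {1..M}"
  shows "(\<Sum>r\<in>{1..M}. gg x r) = H (int x) (- ((-1)^k)) - H (int x) 0"
proof (cases "even k")
  case True
  have s: "(-1::int)^k = 1" using True by simp
  define F1 where "F1 r = H (int r) (-1)" for r :: nat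
  define F0 where "F0 r = H (int r) 0" for r :: nat
  have x1: "1 \<le> x" "x \<le> Suc M" using x by auto
  have "(\<Sum>r\<in>{1..M}. gg x r) = (\<Sum>r\<in>{1..<x}. gg x r) + (\<Sum>r\<in>{x..<Suc M}. gg x r)"
    using sum.atLeastLessThan_concat[OF x1, of "gg x"] by (simp add: atLeastLessThanSuc_atLeastAtMost)
  also have "(\<Sum>r\<in>{1..<x}. gg x r) = (\<Sum>r\<in>{1..<x}. F1 (Suc r) - F1 r)"
    by (rule sum.cong[OF refl]) (auto simp: gg_def cc_def True s F1_def add.commute)
  also have "\<dots> = F1 x - F1 1" using sum_Suc_diff'[OF x1(1)] .
  also have "(\<Sum>r\<in>{x..<Suc M}. gg x r) = (\<Sum>r\<in>{x..<Suc M}. F0 (Suc r) - F0 r)"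
    by (rule sum.cong[OF refl]) (auto simp: gg_def cc_def True s F0_def add.commute)
  also have "\<dots> = F0 (Suc M) - F0 x" using sum_Suc_diff'[OF x1(2)] .
  also have "F0 (Suc M) = F1 1"
  proof -
    have "F0 (Suc M) = H (1 + int M * 1) (-1 + 1)" unfolding F0_def by (simp add: add.commute)
    also have "\<dots> = F1 1" unfolding F1_def by (subst H_per) simp
    finally show ?thesis .
  qed
  finally show ?thesis unfolding F1_def F0_def s by simp
next
  case False
  have s: "(-1::int)^k = -1" using False by simp
  define G1 where "G1 r = H (int r) 1" for r :: nat
  define G0 where "G0 r = H (int r) 0" for r :: nat
  have x1: "1 \<le> Suc x" "Suc x \<le> Suc M" using x by auto
  have "(\<Sum>r\<in>{1..M}. gg x r) = (\<Sum>r\<in>{1..<Suc x}. gg x r) + (\<Sum>r\<in>{Suc x..<Suc M}. gg x r)"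
    using sum.atLeastLessThan_concat[OF x1, of "gg x"] by (simp add: atLeastLessThanSuc_atLeastAtMost)
  also have "(\<Sum>r\<in>{1..<Suc x}. gg x r) = (\<Sum>i\<in>{0..<x}. gg x (Suc i))"
    using sum.shift_bounds_Suc_ivl[of "gg x" 0 x] by simp
  also have "\<dots> = (\<Sum>i\<in>{0..<x}. -(G0 (Suc i) - G0 i))"
    by (rule sum.cong[OF refl]) (auto simp: gg_def cc_def False s G0_def)
  also have "\<dots> = -(G0 x - G0 0)" by (simp only: sum_negf sum_Suc_diff'[OF le0])
  also have "(\<Sum>r\<in>{Suc x..<Suc M}. gg x r) = (\<Sum>i\<in>{x..<M}. gg x (Suc i))"
    using sum.shift_bounds_Suc_ivl[of "gg x" x M] by simp
  also have "\<dots> = (\<Sum>i\<in>{x..<M}. -(G1 (Suc i) - G1 i))"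
    by (rule sum.cong[OF refl]) (auto simp: gg_def cc_def False s G1_def)
  also have "\<dots> = -(G1 M - G1 x)"
  proof -
    have xM: "x \<le> M" using x by simp
    show ?thesis by (simp only: sum_negf sum_Suc_diff'[OF xM])
  qed
  also have "G0 0 = G1 M"
  proof -
    have "G0 0 = H (int M + int M * (-1)) (1 + (-1))" unfolding G0_def by simp
    also have "\<dots> = G1 M" unfolding G1_def by (rule H_per)
    finally show ?thesis .
  qed
  finally show ?thesis unfolding G1_def G0_def s by simp
qed

lemma XK_x: assumes x: "x \<in> {1..M}"
  shows "XK (int x) = restrict (\<lambda>q. if q = k then x else if q = N then y else 1) {0..<Suc N}"
  unfolding XK_def gset_id[OF x] ..

lemma obs_setting_id: "x \<in> {1..M} \<Longrightarrow> obs_setting M x = x"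
  unfolding obs_setting_def by auto

lemma obs_shift_0: "x \<in> {1..M} \<Longrightarrow> obs_shift M x = 0"
  unfolding obs_shift_def by auto

lemma E3: assumes x: "x \<in> {1..M}"
  shows "expval (Suc N) M d p [(k, x, 1), (N, y, -1)] = EE (Suc N) d p (XK (int x)) (\<lambda>a. md d (int (a k) - int (a N)))"
proof -
  have ts: "term_setting (Suc N) M [(k, x, 1), (N, y, -1)] = XK (int x)"
    unfolding term_setting_def XK_x[OF x] using kN x y
    by (intro restrict_ext) (auto simp: obs_setting_id)
  show ?thesis unfolding expval_def ts EE_def md_def using x y by (simp add: obs_shift_0)
qed

lemma E4: assumes x: "x \<in> {1..M}"
  shows "expval (Suc N) M d p [(N, y, 1), (k, x, -1)] = EE (Suc N) d p (XK (int x)) (\<lambda>a. md d (int (a N) - int (a k)))"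
proof -
  have ts: "term_setting (Suc N) M [(N, y, 1), (k, x, -1)] = XK (int x)"
    unfolding term_setting_def XK_x[OF x] using kN x y
    by (intro restrict_ext) (auto simp: obs_setting_id)
  show ?thesis unfolding expval_def ts EE_def md_def using x y by (simp add: obs_shift_0)
qed

lemma main:
  assumes x: "x \<in> {1..M}"
  shows "bellI (Suc N) N M d p + expval (Suc N) M d p [(k, x, 1), (N, y, -1)]
           + expval (Suc N) M d p [(N, y, 1), (k, x, -1)] \<ge> real d - 1"
proof -
  define S where "S = (\<Sum>\<alpha>\<in>box. T1 \<alpha> + T2 \<alpha>)"
  have b: "bellI (Suc N) N M d p = 1 / real M ^ (N - 2) * S"
    unfolding bellI_def S_def ..
  have "S = (\<Sum>\<alpha>\<in>box. T1 \<alpha>) + (\<Sum>\<alpha>\<in>box. T2 \<alpha>)" unfolding S_def by (rule sum.distrib)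
  also have "(\<Sum>\<alpha>\<in>box. T2 \<alpha>) = (\<Sum>\<alpha>\<in>box. T2 (beta \<alpha>))"
    by (rule sum.reindex_bij_betw[OF beta_bij, symmetric])
  also have "(\<Sum>\<alpha>\<in>box. T1 \<alpha>) + (\<Sum>\<alpha>\<in>box. T2 (beta \<alpha>)) = (\<Sum>\<alpha>\<in>box. T1 \<alpha> + T2 (beta \<alpha>))"
    by (rule sum.distrib[symmetric])
  also have "\<dots> \<ge> (\<Sum>\<alpha>\<in>box. gg x (gset M (J1 \<alpha> k)))"
    by (rule sum_mono) (rule per_alpha)
  also have "(\<Sum>\<alpha>\<in>box. gg x (gset M (J1 \<alpha> k))) = real M ^ (N - 2) * (\<Sum>r\<in>{1..M}. gg x r)"
    by (rule CNT)
  finally have Sge: "S \<ge> real M ^ (N - 2) * (H (int x) (- ((-1)^k)) - H (int x) 0)"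
    unfolding TEL[OF x] .
  have Mp: "real M ^ (N - 2) > 0" using M0 by simp
  have bge: "bellI (Suc N) N M d p \<ge> H (int x) (- ((-1)^k)) - H (int x) 0"
  proof -
    have "1 / real M ^ (N - 2) * S \<ge> 1 / real M ^ (N - 2) * (real M ^ (N - 2) * (H (int x) (- ((-1)^k)) - H (int x) 0))"
      using Sge Mp by (intro mult_left_mono) auto
    moreover have "1 / real M ^ (N - 2) * (real M ^ (N - 2) * (H (int x) (- ((-1)^k)) - H (int x) 0))
        = H (int x) (- ((-1)^k)) - H (int x) 0" using Mp M0 by simp
    ultimately show ?thesis unfolding b by linarith
  qed
  define X where "X = XK (int x)"
  have Xs: "X \<in> settings (Suc N) M" unfolding X_def by (rule XK_set)
  define F1 where "F1 a = md d ((-1)^k * (int (a N) + - ((-1)^k)) - (-1)^k * gobs M k (int x) a)" for a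
  define F0 where "F0 a = md d ((-1)^k * (int (a N) + 0) - (-1)^k * gobs M k (int x) a)" for a
  define F3 where "F3 a = md d (int (a k) - int (a N))" for a :: "nat \<Rightarrow> nat"
  define F4 where "F4 a = md d (int (a N) - int (a k))" for a :: "nat \<Rightarrow> nat"
  have pw: "F1 a - F0 a + F3 a + F4 a = real d - 1" for a
  proof -
    have g: "gobs M k (int x) a = int (a k)" by (rule gobs_id[OF x])
    show ?thesis
    proof (cases "even k")
      case True
      have "F1 a - F0 a + F3 a + F4 a = of_int ((int (a N) - int (a k) - 1) mod int d + (- (int (a N) - int (a k))) mod int d)"
        unfolding F1_def F0_def F3_def F4_def md_def g using True by (simp add: algebra_simps)
      also have "\<dots> = real d - 1" unfolding mod_pair[OF d0] by simp
      finally show ?thesis .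
    next
      case False
      have "F1 a - F0 a + F3 a + F4 a = of_int ((int (a k) - int (a N) - 1) mod int d + (- (int (a k) - int (a N))) mod int d)"
        unfolding F1_def F0_def F3_def F4_def md_def g using False by (simp add: algebra_simps)
      also have "\<dots> = real d - 1" unfolding mod_pair[OF d0] by simp
      finally show ?thesis .
    qed
  qed
  have "H (int x) (- ((-1)^k)) - H (int x) 0 + expval (Suc N) M d p [(k, x, 1), (N, y, -1)]
           + expval (Suc N) M d p [(N, y, 1), (k, x, -1)]
      = EE (Suc N) d p X F1 - EE (Suc N) d p X F0 + EE (Suc N) d p X F3 + EE (Suc N) d p X F4"
    unfolding H_def E3[OF x] E4[OF x] X_def F1_def F0_def F3_def F4_def ..
  also have "\<dots> = EE (Suc N) d p X (\<lambda>a. F1 a - F0 a + F3 a + F4 a)"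
    unfolding Ex_add Ex_diff ..
  also have "\<dots> = real d - 1" unfolding pw by (rule Ex_const[OF beh Xs])
  finally show ?thesis using bge by linarith
qed

end

theorem theorem2:
  fixes N M d :: nat
    and p :: "(nat \<Rightarrow> nat) \<Rightarrow> (nat \<Rightarrow> nat) \<Rightarrow> real"
  assumes "N \<ge> 2" and "M \<ge> 2" and "d \<ge> 2"
    and "is_behaviour (N + 1) M d p"
    and "nonsignalling (N + 1) M d p"
    and "k < N"
    and "xk \<in> {1..M}" and "xN1 \<in> {1..M}"
  shows "bellI (N + 1) N M d p
           + expval (N + 1) M d p [(k, xk, 1), (N, xN1, -1)]
           + expval (N + 1) M d p [(N, xN1, 1), (k, xk, -1)]
         \<ge> real d - 1"
proof -
  interpret ctx N M d k xN1 p
    using assms by unfold_locales auto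
  show ?thesis using main[OF assms(7)] by simp
qed


end
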